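(* Let $a,b,d>0$, $c>c_-$, $\phi(x)=\frac{ax^3+bx^2+cx+d}{x^3}$ ($x>0$), and let $(p,q)$ be a 2-cycle of $\phi$ with $p<q$. \begin{description} \item[(a)] If $\phi$ has a unique equilibrium $\overline{t}$, then $p<\overline{t}<q$. \item[(b)] If $\phi$ has two equilibria $\overline{t}_1<\overline{t}_2$, then for $c=c_m$ one of the following holds: $$p<\overline{t}_1<q<\overline{t}_2,\quad\text{or}\quad p<\overline{t}_1,\ q>\overline{t}_2;$$ and for $c=c_M$ one has $p<\overline{t}_1$, $q>\overline{t}_2$. \item[(c)] If $\phi$ has three equilibria $\overline{t}_1<\overline{t}_2<\overline{t}_3$, then one of the following holds: $$p<\overline{t}_1<q<\overline{t}_2,\quad\text{or}\quad p<\overline{t}_1,\ q>\overline{t}_3.$$ \end{description}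
   Context: $c_-$ is the unique negative zero of $Q(x)=4ax^3-b^2x^2-18abd\,x+27a^2d^2+4db^3$. A 2-cycle is a pair $(p,q)$ of positive numbers with $p\neq q$, $\phi(p)=q$, $\phi(q)=p$; an equilibrium is $t>0$ with $\phi(t)=t$, equivalently a positive root of $P(t)=t^4-at^3-bt^2-ct-d$. Let $c^*=-\sqrt{3bd}$ and let $c_b$ be the unique negative root of $H(x)=108x^2+(108ab+27a^3)x-9a^2b^2-32b^3$. When $c_b<\frac{b^2-12d}{3a}$, as the parameter $c$ increases from $c_b$ (with $a,b,d$ fixed), $P$ first acquires a positive double root $t_m$ at a local minimum of $P$, and later a positive double root $t_M$ at a local maximum of $P$; $c_m$ and $c_M$ denote the corresponding values of $c$. Two equilibria occur only for $c=c_m$ or $c=c_M$. *)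

theory Defs
  imports Complex_Main
begin

definition phi :: "real \<Rightarrow> real \<Rightarrow> real \<Rightarrow> real \<Rightarrow> real \<Rightarrow> real" where
  "phi a b c d x = (a*x^3 + b*x^2 + c*x + d) / x^3"

definition Pq :: "real \<Rightarrow> real \<Rightarrow> real \<Rightarrow> real \<Rightarrow> real \<Rightarrow> real" where
  "Pq a b c d t = t^4 - a*t^3 - b*t^2 - c*t - d"

definition dPq :: "real \<Rightarrow> real \<Rightarrow> real \<Rightarrow> real \<Rightarrow> real" where
  "dPq a b c t = 4*t^3 - 3*a*t^2 - 2*b*t - c"

definition Qc :: "real \<Rightarrow> real \<Rightarrow> real \<Rightarrow> real \<Rightarrow> real" where
  "Qc a b d x = 4*a*x^3 - b^2*x^2 - 18*a*b*d*x + 27*a^2*d^2 + 4*d*b^3"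

definition c_minus :: "real \<Rightarrow> real \<Rightarrow> real \<Rightarrow> real" where
  "c_minus a b d = (THE x. x < 0 \<and> Qc a b d x = 0)"

definition Hc :: "real \<Rightarrow> real \<Rightarrow> real \<Rightarrow> real" where
  "Hc a b x = 108*x^2 + (108*a*b + 27*a^3)*x - 9*a^2*b^2 - 32*b^3"

definition c_b :: "real \<Rightarrow> real \<Rightarrow> real" where
  "c_b a b = (THE x. x < 0 \<and> Hc a b x = 0)"

definition dbl_root_min :: "real \<Rightarrow> real \<Rightarrow> real \<Rightarrow> real \<Rightarrow> real \<Rightarrow> bool" where
  "dbl_root_min a b c d t \<longleftrightarrow> t > 0 \<and> Pq a b c d t = 0 \<and> dPq a b c t = 0 \<and>
     (\<exists>e>0. \<forall>s. \<bar>s - t\<bar> < e \<longrightarrow> Pq a b c d t \<le> Pq a b c d s)"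

definition dbl_root_max :: "real \<Rightarrow> real \<Rightarrow> real \<Rightarrow> real \<Rightarrow> real \<Rightarrow> bool" where
  "dbl_root_max a b c d t \<longleftrightarrow> t > 0 \<and> Pq a b c d t = 0 \<and> dPq a b c t = 0 \<and>
     (\<exists>e>0. \<forall>s. \<bar>s - t\<bar> < e \<longrightarrow> Pq a b c d s \<le> Pq a b c d t)"

definition c_m :: "real \<Rightarrow> real \<Rightarrow> real \<Rightarrow> real" where
  "c_m a b d = (LEAST c. c > c_b a b \<and> (\<exists>t. dbl_root_min a b c d t))"

definition c_M :: "real \<Rightarrow> real \<Rightarrow> real \<Rightarrow> real" where
  "c_M a b d = (LEAST c. c > c_m a b d \<and> (\<exists>t. dbl_root_max a b c d t))"

definition equilibria :: "real \<Rightarrow> real \<Rightarrow> real \<Rightarrow> real \<Rightarrow> real set" where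
  "equilibria a b c d = {t. t > 0 \<and> phi a b c d t = t}"

definition two_cycle :: "real \<Rightarrow> real \<Rightarrow> real \<Rightarrow> real \<Rightarrow> real \<Rightarrow> real \<Rightarrow> bool" where
  "two_cycle a b c d p q \<longleftrightarrow> p > 0 \<and> q > 0 \<and> p \<noteq> q \<and> phi a b c d p = q \<and> phi a b c d q = p"

end

theory Submission
  imports Defs "HOL-Computational_Algebra.Polynomial"
begin

lemma Pq_cont: "isCont (\<lambda>t. Pq a b c d t) x"
  unfolding Pq_def by (intro continuous_intros)

lemma ivt_up:
  assumes "x \<le> y" "Pq a b c d x \<le> 0" "Pq a b c d y \<ge> 0"
  shows "\<exists>z. x \<le> z \<and> z \<le> y \<and> Pq a b c d z = 0"
  using IVT[of "\<lambda>t. Pq a b c d t" x 0 y] assms Pq_cont by auto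

lemma ivt_down:
  assumes "x \<le> y" "Pq a b c d x \<ge> 0" "Pq a b c d y \<le> 0"
  shows "\<exists>z. x \<le> z \<and> z \<le> y \<and> Pq a b c d z = 0"
  using IVT2[of "\<lambda>t. Pq a b c d t" y 0 x] assms Pq_cont by auto

lemma eq_iff:
  assumes "t > 0"
  shows "t \<in> equilibria a b c d \<longleftrightarrow> Pq a b c d t = 0"
proof -
  have "phi a b c d t = t \<longleftrightarrow> a*t^3 + b*t^2 + c*t + d = t * t^3"
    using assms unfolding phi_def by (auto simp: field_simps)
  also have "\<dots> \<longleftrightarrow> Pq a b c d t = 0" unfolding Pq_def by (auto simp: algebra_simps power_def)
  finally show ?thesis using assms unfolding equilibria_def by auto
qed

lemma cyc_eqs:
  assumes "two_cycle a b c d p q"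
  shows "a*p^3 + b*p^2 + c*p + d = q*p^3" "a*q^3 + b*q^2 + c*q + d = p*q^3"
  using assms unfolding two_cycle_def phi_def by (auto simp: field_simps)

lemma cyc_P:
  assumes "two_cycle a b c d p q" "p < q"
  shows "Pq a b c d p < 0" "Pq a b c d q > 0"
proof -
  have pq: "p > 0" "q > 0" using assms unfolding two_cycle_def by auto
  note e = cyc_eqs[OF assms(1)]
  have "Pq a b c d p = p^3 * (p - q)" using e(1) unfolding Pq_def by (simp add: algebra_simps power_def)
  then show "Pq a b c d p < 0" using pq assms(2) by (simp add: mult_pos_neg)
  have "Pq a b c d q = q^3 * (q - p)" using e(2) unfolding Pq_def by (simp add: algebra_simps power_def)
  then show "Pq a b c d q > 0" using pq assms(2) by simp
qed

lemma key:
  assumes "two_cycle a b c d p q" "p < q" "0 < t" "t \<le> p" "a > 0" "d > 0"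
  shows "Pq a b c d t < 0"
proof -
  have pq: "p > 0" "q > 0" using assms unfolding two_cycle_def by auto
  note e = cyc_eqs[OF assms(1)]
  have hb: "b*(p*q) = p^2*q^2 + d - a*p*q*(p+q)"
  proof -
    have "(p - q) * (b*(p*q)) = (p - q) * (p^2*q^2 + d - a*p*q*(p+q))"
      using e by algebra
    then show ?thesis using assms(2) by simp
  qed
  have hc: "c*(p*q) = a*p^2*q^2 - d*(p+q)"
  proof -
    have "p * (c*(p*q)) = p * (a*p^2*q^2 - d*(p+q))"
    proof -
      show ?thesis using hb e by algebra
    qed
    then show ?thesis using pq by simp
  qed
  have id: "(p*q) * (- Pq a b c d t) = p*q*t^2*(p*q - t^2) + (p-t)*(q-t)*(d + a*p*q*t)"
  proof -
    have "(p*q) * (- Pq a b c d t) = -(p*q)*t^4 + a*p*q*t^3 + t^2*(b*(p*q)) + t*(c*(p*q)) + p*q*d"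
      unfolding Pq_def by (simp add: algebra_simps)
    also have "\<dots> = p*q*t^2*(p*q - t^2) + (p-t)*(q-t)*(d + a*p*q*t)"
      unfolding hb hc by (simp add: algebra_simps power_def)
    finally show ?thesis .
  qed
  have "p*q - t^2 > 0"
  proof -
    have "t^2 \<le> p^2" using assms by (simp add: power_mono)
    also have "p^2 < p*q" using pq assms(2) by (simp add: power2_eq_square)
    finally show ?thesis by simp
  qed
  then have "p*q*t^2*(p*q - t^2) > 0" using pq assms(3) by simp
  moreover have "(p-t)*(q-t)*(d + a*p*q*t) \<ge> 0"
    using assms pq by (intro mult_nonneg_nonneg) auto
  ultimately have "(p*q) * (- Pq a b c d t) > 0" using id by linarith
  then have "(p*q) * Pq a b c d t < 0" by simp
  moreover have "p*q > 0" using pq by simp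
  ultimately show ?thesis using pq by (auto simp add: mult_less_0_iff)
qed

lemma quad3:
  fixes A B C x y z :: real
  assumes "A*x^2 + B*x + C = 0" "A*y^2 + B*y + C = 0" "A*z^2 + B*z + C = 0"
    "x \<noteq> y" "y \<noteq> z" "x \<noteq> z"
  shows "A = 0 \<and> B = 0 \<and> C = 0"
proof -
  have "(x - y) * (A*(x+y) + B) = 0" using assms(1,2) by (simp add: algebra_simps power2_eq_square)
  then have 1: "A*(x+y) + B = 0" using assms by simp
  have "(y - z) * (A*(y+z) + B) = 0" using assms(2,3) by (simp add: algebra_simps power2_eq_square)
  then have 2: "A*(y+z) + B = 0" using assms by simp
  have "A * (x - z) = (A*(x+y) + B) - (A*(y+z) + B)" by (simp add: algebra_simps)
  then have "A * (x - z) = 0" using 1 2 by simp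
  then have A: "A = 0" using assms by simp
  then have "B = 0" using 1 by simp
  then show ?thesis using A assms(1) by simp
qed

lemma three_roots_sign:
  assumes "Pq a b c d t1 = 0" "Pq a b c d t2 = 0" "Pq a b c d t3 = 0"
    "0 < t1" "t1 < t2" "t2 < t3" "d > 0" "t2 < x" "x < t3"
  shows "Pq a b c d x < 0"
proof -
  define r where "r = a - t1 - t2 - t3"
  define A where "A = -b - (t1*t2+t1*t3+t2*t3) - r*(t1+t2+t3)"
  define B where "B = -c + t1*t2*t3 + r*(t1*t2+t1*t3+t2*t3)"
  define C where "C = -d - r*(t1*t2*t3)"
  have D: "Pq a b c d t - (t-t1)*(t-t2)*(t-t3)*(t-r) = A*t^2 + B*t + C" for t
    unfolding Pq_def A_def B_def C_def r_def by (simp add: algebra_simps power_def)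
  have "A*t1^2 + B*t1 + C = 0" "A*t2^2 + B*t2 + C = 0" "A*t3^2 + B*t3 + C = 0"
    using D[of t1] D[of t2] D[of t3] assms(1-3) by auto
  then have ABC: "A = 0" "B = 0" "C = 0" using quad3[of A t1 B C t2 t3] assms(4-6) by auto
  have "r*(t1*t2*t3) = -d" using ABC(3) unfolding C_def by simp
  moreover have "t1*t2*t3 > 0" using assms by simp
  ultimately have "r < 0" using assms(7) by (smt (verit) mult_nonneg_nonneg)
  have "Pq a b c d x = (x-t1)*(x-t2)*(x-t3)*(x-r)" using D[of x] ABC by simp
  moreover have "(x-t1)*(x-t2)*(x-r) > 0" using assms \<open>r < 0\<close> by simp
  moreover have "x - t3 < 0" using assms by simp
  ultimately have "((x-t1)*(x-t2)*(x-r)) * (x-t3) < 0" by (simp add: mult_pos_neg)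
  moreover have "(x-t1)*(x-t2)*(x-t3)*(x-r) = ((x-t1)*(x-t2)*(x-r)) * (x-t3)" by (simp add: ac_simps)
  ultimately show ?thesis using \<open>Pq a b c d x = _\<close> by linarith
qed

definition FF :: "real \<Rightarrow> real \<Rightarrow> real \<Rightarrow> real \<Rightarrow> real" where
  "FF a b d t = t^3 - a*t^2 - b*t - d/t"

definition RR :: "real \<Rightarrow> real \<Rightarrow> real \<Rightarrow> real \<Rightarrow> real" where
  "RR a b d t = 3*t^4 - 2*a*t^3 - b*t^2 + d"

definition cf :: "real \<Rightarrow> real \<Rightarrow> real \<Rightarrow> real" where
  "cf a b t = 4*t^3 - 3*a*t^2 - 2*b*t"

lemma FF_deriv: "t > 0 \<Longrightarrow> (FF a b d has_real_derivative RR a b d t / t^2) (at t)"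
  unfolding FF_def[abs_def] RR_def
  apply (rule derivative_eq_intros refl | simp)+
  apply (simp add: field_simps eval_nat_numeral)
  done

lemma FF_cont: "0 < e \<Longrightarrow> continuous_on {e..T} (FF a b d)"
  unfolding FF_def[abs_def] by (intro continuous_intros) auto

lemma RR_finite: "finite {t. RR a b d t = 0}"
proof -
  have "{t. RR a b d t = 0} = {t. poly [:d, 0, -b, -2*a, 3:] t = 0}"
    unfolding RR_def by (auto simp: algebra_simps power_def)
  moreover have "[:d, 0, -b, -2*a, 3:] \<noteq> 0" by simp
  ultimately show ?thesis using poly_roots_finite by metis
qed

lemma Pq_FF: "t > 0 \<Longrightarrow> Pq a b c d t = t * (FF a b d t - c)"
  unfolding Pq_def FF_def by (simp add: field_simps eval_nat_numeral)

lemma FF_cf: "t > 0 \<Longrightarrow> RR a b d t = 0 \<Longrightarrow> FF a b d t = cf a b t"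
proof -
  assume t: "t > 0" "RR a b d t = 0"
  have "t * (FF a b d t - cf a b t) = - RR a b d t"
    unfolding FF_def cf_def RR_def using t(1) by (simp add: field_simps eval_nat_numeral)
  then show ?thesis using t by simp
qed

lemma dbl_cf:
  assumes "t > 0" "Pq a b c d t = 0" "dPq a b c t = 0"
  shows "c = cf a b t \<and> RR a b d t = 0"
proof -
  have c: "c = cf a b t" using assms(3) unfolding dPq_def cf_def by simp
  have "RR a b d t = - Pq a b c d t" unfolding RR_def Pq_def c cf_def by (simp add: algebra_simps eval_nat_numeral)
  then show ?thesis using c assms by simp
qed

lemma dbl_set_finite:
  assumes "\<And>c. P c \<Longrightarrow> \<exists>t. t > 0 \<and> Pq a b c d t = 0 \<and> dPq a b c t = 0"
  shows "finite {c. P c}"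
proof -
  have "{c. P c} \<subseteq> cf a b ` {t. RR a b d t = 0}"
  proof
    fix c assume "c \<in> {c. P c}"
    then obtain t where "t > 0" "Pq a b c d t = 0" "dPq a b c t = 0" using assms by blast
    then show "c \<in> cf a b ` {t. RR a b d t = 0}" using dbl_cf by blast
  qed
  then show ?thesis using RR_finite finite_subset by blast
qed

lemma local_max_dbl:
  assumes "t > 0" "e > 0" "e \<le> t" "\<forall>y. \<bar>t - y\<bar> < e \<longrightarrow> FF a b d y \<le> FF a b d t"
  shows "dbl_root_max a b (FF a b d t) d t"
proof -
  have R: "RR a b d t / t^2 = 0" using DERIV_local_max[OF FF_deriv[OF assms(1)] assms(2,4)] .
  then have R0: "RR a b d t = 0" using assms(1) by simp
  have "dPq a b (FF a b d t) t = cf a b t - FF a b d t" unfolding dPq_def cf_def by simp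
  then have "dPq a b (FF a b d t) t = 0" using FF_cf[OF assms(1) R0] by simp
  moreover have "Pq a b (FF a b d t) d t = 0" using Pq_FF[OF assms(1)] by simp
  moreover have "\<forall>s. \<bar>s - t\<bar> < e \<longrightarrow> Pq a b (FF a b d t) d s \<le> Pq a b (FF a b d t) d t"
  proof (intro allI impI)
    fix s assume s: "\<bar>s - t\<bar> < e"
    then have "s > 0" using assms by linarith
    moreover have "FF a b d s \<le> FF a b d t" using assms(4) s by (simp add: abs_minus_commute)
    ultimately show "Pq a b (FF a b d t) d s \<le> Pq a b (FF a b d t) d t"
      using Pq_FF[of s] Pq_FF[OF assms(1)] by (simp add: mult_nonneg_nonpos)
  qed
  ultimately show ?thesis unfolding dbl_root_max_def using assms by blast
qed

lemma local_min_dbl: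
  assumes "t > 0" "e > 0" "e \<le> t" "\<forall>y. \<bar>t - y\<bar> < e \<longrightarrow> FF a b d t \<le> FF a b d y"
  shows "dbl_root_min a b (FF a b d t) d t"
proof -
  have R: "RR a b d t / t^2 = 0" using DERIV_local_min[OF FF_deriv[OF assms(1)] assms(2,4)] .
  then have R0: "RR a b d t = 0" using assms(1) by simp
  have "dPq a b (FF a b d t) t = cf a b t - FF a b d t" unfolding dPq_def cf_def by simp
  then have "dPq a b (FF a b d t) t = 0" using FF_cf[OF assms(1) R0] by simp
  moreover have "Pq a b (FF a b d t) d t = 0" using Pq_FF[OF assms(1)] by simp
  moreover have "\<forall>s. \<bar>s - t\<bar> < e \<longrightarrow> Pq a b (FF a b d t) d t \<le> Pq a b (FF a b d t) d s"
  proof (intro allI impI)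
    fix s assume s: "\<bar>s - t\<bar> < e"
    then have "s > 0" using assms by linarith
    moreover have "FF a b d t \<le> FF a b d s" using assms(4) s by (simp add: abs_minus_commute)
    ultimately show "Pq a b (FF a b d t) d t \<le> Pq a b (FF a b d t) d s"
      using Pq_FF[of s] Pq_FF[OF assms(1)] by simp
  qed
  ultimately show ?thesis unfolding dbl_root_min_def using assms by blast
qed

lemma cM_dbl:
  assumes a: "a > 0" and b: "b > 0" and d: "d > 0" and h: "c_b a b < (b^2 - 12*d) / (3*a)"
  shows "\<exists>t. dbl_root_max a b (c_M a b d) d t"
proof -
  define ts where "ts = (3*a + sqrt (9*a^2 + 24*b)) / 12"
  define x0 where "x0 = -(ts*(3*a^2+8*b) + a*b)/6"
  have sq: "(sqrt (9*a^2+24*b))^2 = 9*a^2+24*b" using a b by simp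
  have "sqrt (9*a^2) < sqrt (9*a^2+24*b)" using b by simp
  moreover have "sqrt (9*a^2) = 3*a" using a by (simp add: real_sqrt_mult)
  ultimately have sqge: "sqrt (9*a^2+24*b) > 3*a" by simp
  have rel: "6*ts^2 = 3*a*ts + b" unfolding ts_def using sq by (simp add: field_simps power2_eq_square)
  have tspos: "ts > a/2" using sqge unfolding ts_def by simp
  then have ts0: "ts > 0" using a by simp
  have "ts*(3*a^2+8*b) > 0" using ts0 a b by (intro mult_pos_pos add_pos_pos) auto
  moreover have "a*b > 0" using a b by simp
  ultimately have x0neg: "x0 < 0" unfolding x0_def by simp
  have Hx0: "Hc a b x0 = 0" unfolding Hc_def x0_def using rel by algebra
  have cb: "c_b a b = x0"
    unfolding c_b_def
  proof (rule the_equality)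
    show "x0 < 0 \<and> Hc a b x0 = 0" using x0neg Hx0 by simp
  next
    fix x assume x: "x < 0 \<and> Hc a b x = 0"
    show "x = x0"
    proof (rule ccontr)
      assume ne: "x \<noteq> x0"
      define B where "B = 108*a*b + 27*a^3"
      have "Hc a b x - Hc a b x0 = (x - x0) * (108*(x+x0) + B)"
        unfolding Hc_def B_def by (simp add: algebra_simps power2_eq_square)
      then have "(x - x0) * (108*(x+x0) + B) = 0" using x Hx0 by simp
      then have B: "B = -108*(x+x0)" using ne by simp
      have "Hc a b x0 = -108*x*x0 - 9*a^2*b^2 - 32*b^3"
        unfolding Hc_def using B unfolding B_def by algebra
      moreover have "x*x0 > 0" using x x0neg by (simp add: mult_neg_neg)
      moreover have "9*a^2*b^2 + 32*b^3 > 0" using a b by (simp add: add_pos_pos)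
      ultimately have "Hc a b x0 < 0" by linarith
      then show False using Hx0 by simp
    qed
  qed
  have R12: "12 * RR a b d ts = -(b^2 - 12*d - 3*a*x0)" unfolding RR_def x0_def using rel by algebra
  have "x0 < (b^2 - 12*d) / (3*a)" using h cb by simp
  then have "3*a*x0 < b^2 - 12*d" using a by (simp add: pos_less_divide_eq mult.commute)
  then have Rts: "RR a b d ts < 0" using R12 by linarith
  have cfid: "cf a b t - x0 = (t - ts)^2 * (4*t + 8*ts - 3*a)" for t
    unfolding cf_def x0_def using rel by algebra
  have der: "(FF a b d has_real_derivative RR a b d ts / ts^2) (at ts)" using FF_deriv[OF ts0] .
  have dneg: "RR a b d ts / ts^2 < 0" using Rts ts0 by (simp add: divide_neg_pos)
  define M where "M = \<bar>FF a b d ts\<bar>"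
  obtain del1 where del1: "del1 > 0" "\<forall>h>0. h < del1 \<longrightarrow> FF a b d ts < FF a b d (ts - h)"
    using DERIV_neg_dec_left[OF der dneg] by blast
  define s1 where "s1 = ts - min (del1/2) (ts/2)"
  have hm1: "min (del1/2) (ts/2) > 0" using del1 ts0 by simp
  have hm2: "min (del1/2) (ts/2) \<le> del1/2" by (rule min.cobounded1)
  have hm3: "min (del1/2) (ts/2) \<le> ts/2" by (rule min.cobounded2)
  have s1: "0 < s1" "s1 < ts" "FF a b d ts < FF a b d s1"
    using hm1 hm2 hm3 del1 unfolding s1_def by auto
  define eps where "eps = min (s1/2) (min 1 (d/(M+2)))"
  have M0: "M \<ge> 0" unfolding M_def by simp
  have ep1: "eps > 0" unfolding eps_def using s1 d M0 by auto
  have ep2: "eps \<le> s1/2" unfolding eps_def by (rule min.cobounded1)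
  have ep3: "eps \<le> min 1 (d/(M+2))" unfolding eps_def by (rule min.cobounded2)
  then have ep4: "eps \<le> 1" "eps \<le> d/(M+2)" by auto
  note eps = ep1 ep2 ep4
  have "eps * (M+2) \<le> d" using eps(4) M0 by (simp add: pos_le_divide_eq)
  then have dge: "d / eps \<ge> M + 2" using eps(1) by (simp add: pos_le_divide_eq mult.commute)
  have e3: "eps^3 \<le> 1" using eps by (simp add: power_le_one)
  have "a*eps^2 \<ge> 0" "b*eps \<ge> 0" using a b eps(1) by auto
  then have "FF a b d eps \<le> eps^3 - d/eps"
    unfolding FF_def by linarith
  also have "\<dots> < - M" using e3 dge by linarith
  also have "- M \<le> FF a b d ts" unfolding M_def by simp
  finally have Feps: "FF a b d eps < FF a b d ts" .
  obtain t1 where t1: "t1 \<in> {eps..ts}" "\<forall>y\<in>{eps..ts}. FF a b d y \<le> FF a b d t1"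
    using continuous_attains_sup[of "{eps..ts}" "FF a b d"] FF_cont[OF eps(1)] eps s1 by auto
  have "s1 \<in> {eps..ts}" using eps s1 by auto
  then have Ft1: "FF a b d s1 \<le> FF a b d t1" using t1 by blast
  have t1ne: "t1 \<noteq> ts" "t1 \<noteq> eps" using Ft1 s1 Feps by auto
  have t1i: "eps < t1" "t1 < ts" using t1 t1ne by auto
  define e1 where "e1 = min (t1 - eps) (ts - t1)"
  have e1: "e1 > 0" "e1 \<le> t1" unfolding e1_def using t1i eps by auto
  have "\<forall>y. \<bar>t1 - y\<bar> < e1 \<longrightarrow> FF a b d y \<le> FF a b d t1"
  proof (intro allI impI)
    fix y assume "\<bar>t1 - y\<bar> < e1"
    then have "y \<in> {eps..ts}" unfolding e1_def by auto
    then show "FF a b d y \<le> FF a b d t1" using t1 by blast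
  qed
  moreover have t1pos: "t1 > 0" using t1i eps by linarith
  ultimately have max1: "dbl_root_max a b (FF a b d t1) d t1"
    using local_max_dbl[OF t1pos e1(1) e1(2)] by blast
  obtain del2 where del2: "del2 > 0" "\<forall>h>0. h < del2 \<longrightarrow> FF a b d ts > FF a b d (ts + h)"
    using DERIV_neg_dec_right[OF der dneg] by blast
  define s2 where "s2 = ts + del2/2"
  have s2: "ts < s2" "FF a b d s2 < FF a b d ts" using del2 unfolding s2_def by auto
  define T where "T = 1 + a + b + d + M + s2"
  have T1: "T \<ge> 1" "T - a \<ge> 1 + b + d + M" "T > s2" unfolding T_def using a b d M0 s2 ts0 by auto
  have q1: "T^2 - a*T - b \<ge> 1 + d + M"
  proof -
    have "T*(T - a) \<ge> 1*(T - a)" using T1 M0 b d by (intro mult_right_mono) auto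
    then show ?thesis using T1 by (simp add: power2_eq_square algebra_simps)
  qed
  have q2: "T^3 - a*T^2 - b*T \<ge> 1 + d + M"
  proof -
    have "T*(T^2 - a*T - b) \<ge> 1*(T^2 - a*T - b)" using T1 q1 M0 d by (intro mult_right_mono) auto
    then show ?thesis using q1 by (simp add: power2_eq_square power3_eq_cube algebra_simps)
  qed
  have "d / T \<le> d" using T1 d by (simp add: divide_le_eq)
  then have FT: "FF a b d T > FF a b d ts" using q2 unfolding FF_def M_def by linarith
  obtain t2 where t2: "t2 \<in> {ts..T}" "\<forall>y\<in>{ts..T}. FF a b d t2 \<le> FF a b d y"
    using continuous_attains_inf[of "{ts..T}" "FF a b d"] FF_cont[OF ts0] T1 s2 by auto
  have "s2 \<in> {ts..T}" using s2 T1 by auto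
  then have Ft2: "FF a b d t2 \<le> FF a b d s2" using t2 by blast
  have t2ne: "t2 \<noteq> ts" "t2 \<noteq> T" using Ft2 s2 FT by auto
  have t2i: "ts < t2" "t2 < T" using t2 t2ne by auto
  define e2 where "e2 = min (t2 - ts) (T - t2)"
  have e2: "e2 > 0" "e2 \<le> t2" unfolding e2_def using t2i ts0 by auto
  have "\<forall>y. \<bar>t2 - y\<bar> < e2 \<longrightarrow> FF a b d t2 \<le> FF a b d y"
  proof (intro allI impI)
    fix y assume "\<bar>t2 - y\<bar> < e2"
    then have "y \<in> {ts..T}" unfolding e2_def by auto
    then show "FF a b d t2 \<le> FF a b d y" using t2 by blast
  qed
  moreover have t2pos: "t2 > 0" using t2i ts0 by linarith
  ultimately have min2: "dbl_root_min a b (FF a b d t2) d t2"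
    using local_min_dbl[OF t2pos e2(1) e2(2)] by blast
  have R2: "RR a b d t2 = 0" using min2 dbl_cf unfolding dbl_root_min_def by blast
  have F2: "FF a b d t2 = cf a b t2" using FF_cf[OF _ R2] t2i ts0 by simp
  have "(t2 - ts)^2 > 0" using t2i by simp
  moreover have "4*t2 + 8*ts - 3*a > 0" using tspos t2i ts0 by linarith
  ultimately have "cf a b t2 - x0 > 0" using cfid[of t2] by simp
  then have F2gt: "FF a b d t2 > c_b a b" using F2 cb by simp
  define Sm where "Sm = {c. c > c_b a b \<and> (\<exists>t. dbl_root_min a b c d t)}"
  have finm: "finite {c. c > c_b a b \<and> (\<exists>t. dbl_root_min a b c d t)}"
    by (rule dbl_set_finite[where a=a and b=b and d=d]) (auto simp: dbl_root_min_def)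
  have inm: "FF a b d t2 \<in> Sm" unfolding Sm_def using F2gt min2 by blast
  have cm: "c_m a b d = Min Sm" unfolding c_m_def Sm_def
    using Least_Min[OF finm] inm unfolding Sm_def by blast
  have cmle: "c_m a b d \<le> FF a b d t2" unfolding cm using Min_le[OF finm[folded Sm_def] inm] .
  define SM where "SM = {c. c > c_m a b d \<and> (\<exists>t. dbl_root_max a b c d t)}"
  have finM: "finite {c. c > c_m a b d \<and> (\<exists>t. dbl_root_max a b c d t)}"
    by (rule dbl_set_finite[where a=a and b=b and d=d]) (auto simp: dbl_root_max_def)
  have "FF a b d t1 > c_m a b d" using cmle Ft2 s2 s1 Ft1 by linarith
  then have inM: "FF a b d t1 \<in> SM" unfolding SM_def using max1 by blast
  have cM: "c_M a b d = Min SM" unfolding c_M_def SM_def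
    using Least_Min[OF finM] inM unfolding SM_def by blast
  have "Min SM \<in> SM" using Min_in[OF finM[folded SM_def]] inM by blast
  then show ?thesis unfolding cM SM_def by blast
qed

theorem lemma4:
  fixes a b c d p q :: real
  assumes "a > 0" and "b > 0" and "d > 0"
    and "c > c_minus a b d"
    and "two_cycle a b c d p q" and "p < q"
  shows
    "(\<forall>t. equilibria a b c d = {t} \<longrightarrow> p < t \<and> t < q)
   \<and> (\<forall>t1 t2. c_b a b < (b^2 - 12*d) / (3*a) \<and> equilibria a b c d = {t1, t2} \<and> t1 < t2 \<longrightarrow>
        (c = c_m a b d \<longrightarrow> (p < t1 \<and> t1 < q \<and> q < t2) \<or> (p < t1 \<and> q > t2))
      \<and> (c = c_M a b d \<longrightarrow> p < t1 \<and> q > t2))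
   \<and> (\<forall>t1 t2 t3. equilibria a b c d = {t1, t2, t3} \<and> t1 < t2 \<and> t2 < t3 \<longrightarrow>
        (p < t1 \<and> t1 < q \<and> q < t2) \<or> (p < t1 \<and> q > t3))"
proof -
  have pq: "p > 0" "q > 0" using assms(5) unfolding two_cycle_def by auto
  have Pp: "Pq a b c d p < 0" and Pqq: "Pq a b c d q > 0" using cyc_P assms(5,6) by auto
  have EQ: "t \<in> equilibria a b c d \<longleftrightarrow> t > 0 \<and> Pq a b c d t = 0" for t
    using eq_iff[of t a b c d] unfolding equilibria_def by auto
  have below: "p < t" if "t \<in> equilibria a b c d" for t
  proof (rule ccontr)
    assume "\<not> p < t"
    then have tp: "t \<le> p" by simp
    have t0: "t > 0" using that EQ by auto
    have "Pq a b c d t < 0" using key[OF assms(5,6) t0 tp assms(1,3)] .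
    then show False using that EQ by auto
  qed
  obtain z where z: "p < z" "z < q" "z \<in> equilibria a b c d"
  proof -
    obtain z where "p \<le> z" "z \<le> q" "Pq a b c d z = 0" using ivt_up[of p q a b c d] Pp Pqq assms(6) by auto
    moreover then have "z \<noteq> p" "z \<noteq> q" using Pp Pqq by auto
    ultimately show ?thesis using pq by (intro that[of z]) (auto simp: EQ)
  qed
  have qne: "q \<notin> equilibria a b c d" using Pqq EQ by auto
  have A: "\<forall>t. equilibria a b c d = {t} \<longrightarrow> p < t \<and> t < q"
    using z below by auto
  have B: "\<forall>t1 t2. c_b a b < (b^2 - 12*d) / (3*a) \<and> equilibria a b c d = {t1, t2} \<and> t1 < t2 \<longrightarrow>
        (c = c_m a b d \<longrightarrow> (p < t1 \<and> t1 < q \<and> q < t2) \<or> (p < t1 \<and> q > t2))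
      \<and> (c = c_M a b d \<longrightarrow> p < t1 \<and> q > t2)"
  proof (intro allI impI)
    fix t1 t2
    assume h: "c_b a b < (b^2 - 12*d) / (3*a) \<and> equilibria a b c d = {t1, t2} \<and> t1 < t2"
    then have E: "equilibria a b c d = {t1, t2}" "t1 < t2" by auto
    have pt1: "p < t1" using below E by auto
    have t1q: "t1 < q" using z E by auto
    have t1pos: "t1 > 0" using E EQ by auto
    have qt2: "q \<noteq> t2" using qne E by auto
    have cM: "c = c_M a b d \<longrightarrow> p < t1 \<and> q > t2"
    proof
      assume cc: "c = c_M a b d"
      show "p < t1 \<and> q > t2"
      proof (rule ccontr)
        assume "\<not> (p < t1 \<and> q > t2)"
        then have qlt: "q < t2" using pt1 qt2 by auto
        obtain t where t: "dbl_root_max a b c d t" using cM_dbl[OF assms(1-3)] h cc by auto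
        then obtain e where e: "e > 0" "\<forall>s. \<bar>s - t\<bar> < e \<longrightarrow> Pq a b c d s \<le> Pq a b c d t"
          and t0: "t > 0" "Pq a b c d t = 0" unfolding dbl_root_max_def by auto
        have "t \<in> equilibria a b c d" using t0 EQ by auto
        then have "t = t1 \<or> t = t2" using E by auto
        then show False
        proof
          assume tt: "t = t1"
          define s where "s = t1 + min (e/2) ((q - t1)/2)"
          have m1: "min (e/2) ((q - t1)/2) > 0" using e(1) t1q by simp
          have m2: "min (e/2) ((q - t1)/2) \<le> e/2" by (rule min.cobounded1)
          have m3: "min (e/2) ((q - t1)/2) \<le> (q - t1)/2" by (rule min.cobounded2)
          note m = m1 m2 m3
          have s: "t1 < s" "s < q" "\<bar>s - t\<bar> < e" unfolding s_def using m e(1) tt by auto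
          have "Pq a b c d s \<le> 0" using e s t0 by auto
          then obtain w where w: "s \<le> w" "w \<le> q" "Pq a b c d w = 0" using ivt_up[of s q a b c d] s Pqq by auto
          then have "w \<noteq> q" using Pqq by auto
          moreover have "w > 0" using w s t1pos by linarith
          then have "w \<in> equilibria a b c d" using EQ w(3) by auto
          then have "w = t1 \<or> w = t2" using E by auto
          ultimately show False using w s qlt by auto
        next
          assume tt: "t = t2"
          define s where "s = t2 - min (e/2) ((t2 - q)/2)"
          have m1: "min (e/2) ((t2 - q)/2) > 0" using e(1) qlt by simp
          have m2: "min (e/2) ((t2 - q)/2) \<le> e/2" by (rule min.cobounded1)
          have m3: "min (e/2) ((t2 - q)/2) \<le> (t2 - q)/2" by (rule min.cobounded2)
          note m = m1 m2 m3
          have s: "q < s" "s < t2" "\<bar>s - t\<bar> < e" unfolding s_def using m e(1) tt by auto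
          have "Pq a b c d s \<le> 0" using e s t0 by auto
          then obtain w where w: "q \<le> w" "w \<le> s" "Pq a b c d w = 0" using ivt_down[of q s a b c d] s Pqq by auto
          then have "w \<noteq> q" using Pqq by auto
          moreover have "w > 0" using w pq by linarith
          then have "w \<in> equilibria a b c d" using EQ w(3) by auto
          then have "w = t1 \<or> w = t2" using E by auto
          ultimately show False using w s t1q by auto
        qed
      qed
    qed
    show "(c = c_m a b d \<longrightarrow> (p < t1 \<and> t1 < q \<and> q < t2) \<or> (p < t1 \<and> q > t2))
      \<and> (c = c_M a b d \<longrightarrow> p < t1 \<and> q > t2)"
      using cM pt1 t1q qt2 by auto
  qed
  have C: "\<forall>t1 t2 t3. equilibria a b c d = {t1, t2, t3} \<and> t1 < t2 \<and> t2 < t3 \<longrightarrow>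
        (p < t1 \<and> t1 < q \<and> q < t2) \<or> (p < t1 \<and> q > t3)"
  proof (intro allI impI)
    fix t1 t2 t3
    assume h: "equilibria a b c d = {t1, t2, t3} \<and> t1 < t2 \<and> t2 < t3"
    then have E: "equilibria a b c d = {t1, t2, t3}" "t1 < t2" "t2 < t3" by auto
    have pt1: "p < t1" using below E by auto
    have t1q: "t1 < q" using z E by auto
    have qn: "q \<noteq> t2" "q \<noteq> t3" using qne E by auto
    have P3: "Pq a b c d t1 = 0" "Pq a b c d t2 = 0" "Pq a b c d t3 = 0" "t1 > 0"
      using E EQ by blast+
    have "\<not> (t2 < q \<and> q < t3)"
      using three_roots_sign[OF P3(1-3) P3(4) E(2,3) assms(3), of q] Pqq by auto
    then show "(p < t1 \<and> t1 < q \<and> q < t2) \<or> (p < t1 \<and> q > t3)"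
      using pt1 t1q qn by auto
  qed
  show ?thesis using A B C by blast
qed

end
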